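(* Let $(\mathcal{Z},\nu)$ be a measurable space with a $\sigma$-finite measure $\nu$, let $P$ be a probability measure on $\mathcal{Z}$ with $P\ll\nu$ and density $\rho=dP/d\nu$ satisfying $\rho>0$ $\nu$-almost everywhere. Let $\omega:\mathcal{Z}\times\mathcal{Z}\to[0,\infty)$ be measurable and symmetric, $\omega(z,\tilde z)=\omega(\tilde z,z)$, and assume $$C_\rho:=\iint\frac{(\rho(z)-\rho(\tilde z))^2}{\rho(z)+\rho(\tilde z)}\,\omega(z,\tilde z)\,\nu(dz)\nu(d\tilde z)<\infty,\qquad \iint\rho(z)\,\omega(z,\tilde z)\,\nu(dz)\nu(d\tilde z)<\infty.$$ For a measurable $f_\theta:\mathcal{Z}\to\mathbb{R}$ define $T_\theta(z,\tilde z)=\tanh\big((f_\theta(z)-f_\theta(\tilde z))/2\big)$, $$\mathcal{J}_\omega(\theta)=\iint\left[T_\theta(z,\tilde z)-\frac{\rho(z)-\rho(\tilde z)}{\rho(z)+\rho(\tilde z)}\right]^2(\rho(z)+\rho(\tilde z))\,\omega(z,\tilde z)\,\nu(dz)\nu(d\tilde z),$$ $$\mathcal{L}_\omega(\theta)=\iint\big[T_\theta(z,\tilde z)-1\big]^2\,\omega(z,\tilde z)\,\rho(z)\,\nu(dz)\nu(d\tilde z).$$ Then $\mathcal{J}_\omega(\theta)=2\mathcal{L}_\omega(\theta)+C_\rho'$, where $C_\rho'=C_\rho-2\iint\rho(z)\omega(z,\tilde z)\,\nu(dz)\nu(d\tilde z)$ does not depend on $f_\theta$. In particular, minimizing $\mathcal{J}_\omega$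 over $f_\theta$ is equivalent to minimizing $\mathcal{L}_\omega$.
   Context: $f_\theta$ is a scalar "energy" function parameterized by $\theta$; all statements concern the dependence on the function $f_\theta$. *)

theory Defs
  imports "HOL-Analysis.Analysis" "HOL-Probability.Probability"
begin

definition Tth :: "('a \<Rightarrow> real) \<Rightarrow> 'a \<Rightarrow> 'a \<Rightarrow> real" where
  "Tth f z w = tanh ((f z - f w) / 2)"

definition J_omega :: "'a measure \<Rightarrow> ('a \<Rightarrow> real) \<Rightarrow> ('a \<times> 'a \<Rightarrow> real) \<Rightarrow> ('a \<Rightarrow> real) \<Rightarrow> real" where
  "J_omega nu \<rho> \<omega> f = (\<integral>p. (case p of (z, w) \<Rightarrow>
      (Tth f z w - (\<rho> z - \<rho> w) / (\<rho> z + \<rho> w))\<^sup>2 * (\<rho> z + \<rho> w) * \<omega> (z, w))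
      \<partial>(nu \<Otimes>\<^sub>M nu))"

definition L_omega :: "'a measure \<Rightarrow> ('a \<Rightarrow> real) \<Rightarrow> ('a \<times> 'a \<Rightarrow> real) \<Rightarrow> ('a \<Rightarrow> real) \<Rightarrow> real" where
  "L_omega nu \<rho> \<omega> f = (\<integral>p. (case p of (z, w) \<Rightarrow>
      (Tth f z w - 1)\<^sup>2 * \<omega> (z, w) * \<rho> z) \<partial>(nu \<Otimes>\<^sub>M nu))"

definition C_rho :: "'a measure \<Rightarrow> ('a \<Rightarrow> real) \<Rightarrow> ('a \<times> 'a \<Rightarrow> real) \<Rightarrow> real" where
  "C_rho nu \<rho> \<omega> = (\<integral>p. (case p of (z, w) \<Rightarrow>
      (\<rho> z - \<rho> w)\<^sup>2 / (\<rho> z + \<rho> w) * \<omega> (z, w)) \<partial>(nu \<Otimes>\<^sub>M nu))"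

definition C_rho' :: "'a measure \<Rightarrow> ('a \<Rightarrow> real) \<Rightarrow> ('a \<times> 'a \<Rightarrow> real) \<Rightarrow> real" where
  "C_rho' nu \<rho> \<omega> = C_rho nu \<rho> \<omega>
      - 2 * (\<integral>p. (case p of (z, w) \<Rightarrow> \<rho> z * \<omega> (z, w)) \<partial>(nu \<Otimes>\<^sub>M nu))"

end

theory Submission
  imports Defs
begin

lemma main_eq:
  fixes nu :: "'a measure" and \<rho> :: "'a \<Rightarrow> real" and \<omega> :: "'a \<times> 'a \<Rightarrow> real"
    and f :: "'a \<Rightarrow> real"
  assumes sf: "sigma_finite_measure nu"
    and rho_meas: "\<rho> \<in> borel_measurable nu"
    and rho_nonneg: "\<And>z. 0 \<le> \<rho> z"
    and omega_meas: "\<omega> \<in> borel_measurable (nu \<Otimes>\<^sub>M nu)"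
    and omega_nonneg: "\<And>z w. 0 \<le> \<omega> (z, w)"
    and omega_sym: "\<And>z w. \<omega> (z, w) = \<omega> (w, z)"
    and C_fin: "integrable (nu \<Otimes>\<^sub>M nu)
                  (\<lambda>(z, w). (\<rho> z - \<rho> w)\<^sup>2 / (\<rho> z + \<rho> w) * \<omega> (z, w))"
    and rho_omega_fin: "integrable (nu \<Otimes>\<^sub>M nu) (\<lambda>(z, w). \<rho> z * \<omega> (z, w))"
    and f_meas: "f \<in> borel_measurable nu"
  shows "J_omega nu \<rho> \<omega> f = 2 * L_omega nu \<rho> \<omega> f + C_rho' nu \<rho> \<omega>"
proof -
  interpret pair_sigma_finite nu nu using sf by (simp add: pair_sigma_finite_def)
  define T where "T = Tth f"
  have Tswap: "T w z = - T z w" for z w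
    unfolding T_def Tth_def by (metis minus_divide_left minus_diff_eq tanh_minus)
  have Tb: "\<bar>T z w\<bar> \<le> 1" for z w
    unfolding T_def Tth_def using tanh_real_bounds[of "(f z - f w) / 2"] by auto
  have T2b: "(T z w)\<^sup>2 \<le> 1" for z w
    using Tb[of z w] by (simp add: abs_square_le_1)
  have Tm: "(\<lambda>(z,w). T z w) \<in> borel_measurable (nu \<Otimes>\<^sub>M nu)"
  proof -
    have th: "(tanh :: real \<Rightarrow> real) \<in> borel_measurable borel"
      by (intro borel_measurable_continuous_onI continuous_on_tanh continuous_on_id) auto
    have "(\<lambda>x. (f (fst x) - f (snd x)) / 2) \<in> borel_measurable (nu \<Otimes>\<^sub>M nu)"
      using f_meas by measurable
    from measurable_compose[OF this th] show ?thesis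
      unfolding T_def Tth_def by (simp add: case_prod_beta' o_def)
  qed
  define A where "A = (\<lambda>(z,w). (T z w)\<^sup>2 * \<omega> (z, w) * \<rho> z)"
  define B where "B = (\<lambda>(z,w). T z w * \<omega> (z, w) * \<rho> z)"
  define R where "R = (\<lambda>(z,w). \<rho> z * \<omega> (z, w))"
  define C where "C = (\<lambda>(z, w). (\<rho> z - \<rho> w)\<^sup>2 / (\<rho> z + \<rho> w) * \<omega> (z, w))"
  have Am: "A \<in> borel_measurable (nu \<Otimes>\<^sub>M nu)"
    unfolding A_def using Tm rho_meas omega_meas by measurable
  have Bm: "B \<in> borel_measurable (nu \<Otimes>\<^sub>M nu)"
    unfolding B_def using Tm rho_meas omega_meas by measurable
  have Ai: "integrable (nu \<Otimes>\<^sub>M nu) A"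
  proof (rule Bochner_Integration.integrable_bound[OF rho_omega_fin Am])
    show "AE x in nu \<Otimes>\<^sub>M nu. norm (A x) \<le> norm (case x of (z, w) \<Rightarrow> \<rho> z * \<omega> (z, w))"
    proof (rule AE_I2)
      fix x show "norm (A x) \<le> norm (case x of (z, w) \<Rightarrow> \<rho> z * \<omega> (z, w))"
      proof (cases x)
        case (Pair z w)
        have "(T z w)\<^sup>2 * (\<omega> (z, w) * \<rho> z) \<le> 1 * (\<omega> (z, w) * \<rho> z)"
          by (rule mult_right_mono[OF T2b]) (simp add: omega_nonneg rho_nonneg)
        then show ?thesis using Pair omega_nonneg[of z w] rho_nonneg[of z]
          by (simp add: A_def abs_mult mult_ac)
      qed
    qed
  qed
  have Bi: "integrable (nu \<Otimes>\<^sub>M nu) B"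
  proof (rule Bochner_Integration.integrable_bound[OF rho_omega_fin Bm])
    show "AE x in nu \<Otimes>\<^sub>M nu. norm (B x) \<le> norm (case x of (z, w) \<Rightarrow> \<rho> z * \<omega> (z, w))"
    proof (rule AE_I2)
      fix x show "norm (B x) \<le> norm (case x of (z, w) \<Rightarrow> \<rho> z * \<omega> (z, w))"
      proof (cases x)
        case (Pair z w)
        have "\<bar>T z w\<bar> * (\<omega> (z, w) * \<rho> z) \<le> 1 * (\<omega> (z, w) * \<rho> z)"
          by (rule mult_right_mono[OF Tb]) (simp add: omega_nonneg rho_nonneg)
        then show ?thesis using Pair omega_nonneg[of z w] rho_nonneg[of z]
          by (simp add: B_def abs_mult mult_ac)
      qed
    qed
  qed
  have Asi: "integrable (nu \<Otimes>\<^sub>M nu) (\<lambda>(x,y). A (y,x))"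
    using integrable_product_swap[OF Ai] .
  have Bsi: "integrable (nu \<Otimes>\<^sub>M nu) (\<lambda>(x,y). B (y,x))"
    using integrable_product_swap[OF Bi] .
  have Asw: "(\<integral>(x,y). A (y,x) \<partial>(nu \<Otimes>\<^sub>M nu)) = integral\<^sup>L (nu \<Otimes>\<^sub>M nu) A"
    using integral_product_swap[OF Am] .
  have Bsw: "(\<integral>(x,y). B (y,x) \<partial>(nu \<Otimes>\<^sub>M nu)) = integral\<^sup>L (nu \<Otimes>\<^sub>M nu) B"
    using integral_product_swap[OF Bm] .
  have Jpt: "(case p of (z, w) \<Rightarrow>
      (Tth f z w - (\<rho> z - \<rho> w) / (\<rho> z + \<rho> w))\<^sup>2 * (\<rho> z + \<rho> w) * \<omega> (z, w))
      = A p + (\<lambda>(x,y). A (y,x)) p - 2 * B p - 2 * (\<lambda>(x,y). B (y,x)) p + C p" for p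
  proof (cases p)
    case (Pair z w)
    have om: "\<omega> (w, z) = \<omega> (z, w)" by (rule omega_sym)
    show ?thesis
    proof (cases "\<rho> z + \<rho> w = 0")
      case True
      then have "\<rho> z = 0" "\<rho> w = 0" using rho_nonneg[of z] rho_nonneg[of w] by auto
      then show ?thesis using Pair by (simp add: A_def B_def C_def)
    next
      case False
      have Tw: "T w z = - T z w" by (rule Tswap)
      have alg: "(t - (a - b) / (a + b))\<^sup>2 * (a + b) * q =
          t\<^sup>2 * q * a + (- t)\<^sup>2 * q * b - 2 * (t * q * a) - 2 * ((- t) * q * b) + (a - b)\<^sup>2 / (a + b) * q"
        if "a + b \<noteq> 0" for a b t q :: real
      proof -
        define x where "x = (a - b) / (a + b)"
        have e1: "(t - x)\<^sup>2 * (a + b) * q = t\<^sup>2 * (a + b) * q - 2 * t * (x * (a + b)) * q + x\<^sup>2 * (a + b) * q"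
          by (simp add: power2_eq_square algebra_simps)
        have e2: "x * (a + b) = a - b" using that by (simp add: x_def)
        have e3: "x\<^sup>2 * (a + b) = (a - b)\<^sup>2 / (a + b)" using that
          by (simp add: x_def power2_eq_square)
        show ?thesis unfolding x_def[symmetric] e1 e2 e3
          by (simp add: algebra_simps power2_eq_square)
      qed
      show ?thesis using Pair alg[OF False, of "T z w" "\<omega> (z, w)"]
        unfolding A_def B_def C_def
        by (simp add: om Tw T_def[symmetric])
    qed
  qed
  have Lpt: "(case p of (z, w) \<Rightarrow> (Tth f z w - 1)\<^sup>2 * \<omega> (z, w) * \<rho> z)
      = A p - 2 * B p + R p" for p
    by (cases p) (simp add: A_def B_def R_def T_def power2_eq_square algebra_simps)
  have J: "J_omega nu \<rho> \<omega> f = 2 * integral\<^sup>L (nu \<Otimes>\<^sub>M nu) A - 4 * integral\<^sup>L (nu \<Otimes>\<^sub>M nu) B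
      + integral\<^sup>L (nu \<Otimes>\<^sub>M nu) C"
  proof -
    have Ci: "integrable (nu \<Otimes>\<^sub>M nu) C" using C_fin by (simp add: C_def)
    have "J_omega nu \<rho> \<omega> f = (\<integral>p. A p + (\<lambda>(x,y). A (y,x)) p - 2 * B p - 2 * (\<lambda>(x,y). B (y,x)) p + C p \<partial>(nu \<Otimes>\<^sub>M nu))"
      unfolding J_omega_def by (rule Bochner_Integration.integral_cong[OF refl]) (rule Jpt)
    also have "\<dots> = integral\<^sup>L (nu \<Otimes>\<^sub>M nu) A + (\<integral>p. (\<lambda>(x,y). A (y,x)) p \<partial>(nu \<Otimes>\<^sub>M nu))
       - 2 * integral\<^sup>L (nu \<Otimes>\<^sub>M nu) B - 2 * (\<integral>p. (\<lambda>(x,y). B (y,x)) p \<partial>(nu \<Otimes>\<^sub>M nu))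
       + integral\<^sup>L (nu \<Otimes>\<^sub>M nu) C"
      using Ai Asi Bi Bsi Ci by simp
    finally show ?thesis using Asw Bsw by simp
  qed
  have L: "L_omega nu \<rho> \<omega> f = integral\<^sup>L (nu \<Otimes>\<^sub>M nu) A - 2 * integral\<^sup>L (nu \<Otimes>\<^sub>M nu) B
      + integral\<^sup>L (nu \<Otimes>\<^sub>M nu) R"
  proof -
    have Ri: "integrable (nu \<Otimes>\<^sub>M nu) R" using rho_omega_fin by (simp add: R_def)
    have "L_omega nu \<rho> \<omega> f = (\<integral>p. A p - 2 * B p + R p \<partial>(nu \<Otimes>\<^sub>M nu))"
      unfolding L_omega_def by (rule Bochner_Integration.integral_cong[OF refl]) (rule Lpt)
    also have "\<dots> = integral\<^sup>L (nu \<Otimes>\<^sub>M nu) A - 2 * integral\<^sup>L (nu \<Otimes>\<^sub>M nu) B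
      + integral\<^sup>L (nu \<Otimes>\<^sub>M nu) R" using Ai Bi Ri by simp
    finally show ?thesis .
  qed
  have Cd: "C_rho' nu \<rho> \<omega> = integral\<^sup>L (nu \<Otimes>\<^sub>M nu) C - 2 * integral\<^sup>L (nu \<Otimes>\<^sub>M nu) R"
    unfolding C_rho'_def C_rho_def C_def R_def by simp
  show ?thesis using J L Cd by simp
qed

theorem theorem1:
  fixes nu P :: "'a measure" and \<rho> :: "'a \<Rightarrow> real" and \<omega> :: "'a \<times> 'a \<Rightarrow> real"
    and f :: "'a \<Rightarrow> real"
  assumes sf: "sigma_finite_measure nu"
    and P_prob: "prob_space P"
    and P_dens: "P = density nu (\<lambda>z. ennreal (\<rho> z))"
    and rho_meas: "\<rho> \<in> borel_measurable nu"
    and rho_nonneg: "\<And>z. 0 \<le> \<rho> z"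
    and rho_pos: "AE z in nu. 0 < \<rho> z"
    and omega_meas: "\<omega> \<in> borel_measurable (nu \<Otimes>\<^sub>M nu)"
    and omega_nonneg: "\<And>z w. 0 \<le> \<omega> (z, w)"
    and omega_sym: "\<And>z w. \<omega> (z, w) = \<omega> (w, z)"
    and C_fin: "integrable (nu \<Otimes>\<^sub>M nu)
                  (\<lambda>(z, w). (\<rho> z - \<rho> w)\<^sup>2 / (\<rho> z + \<rho> w) * \<omega> (z, w))"
    and rho_omega_fin: "integrable (nu \<Otimes>\<^sub>M nu) (\<lambda>(z, w). \<rho> z * \<omega> (z, w))"
    and f_meas: "f \<in> borel_measurable nu"
  shows "J_omega nu \<rho> \<omega> f = 2 * L_omega nu \<rho> \<omega> f + C_rho' nu \<rho> \<omega>
         \<and> (\<forall>g \<in> borel_measurable nu.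
               (J_omega nu \<rho> \<omega> f \<le> J_omega nu \<rho> \<omega> g) \<longleftrightarrow> (L_omega nu \<rho> \<omega> f \<le> L_omega nu \<rho> \<omega> g))"
proof -
  have E: "J_omega nu \<rho> \<omega> g = 2 * L_omega nu \<rho> \<omega> g + C_rho' nu \<rho> \<omega>"
    if "g \<in> borel_measurable nu" for g
    using main_eq[OF sf rho_meas rho_nonneg omega_meas omega_nonneg omega_sym C_fin rho_omega_fin that] .
  show ?thesis using E[OF f_meas] E by auto
qed

end
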